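(* Let $\mathcal{L}$ be a family of linear algebraic laws involving a single binary operation symbol. Then $\mathcal{G}(\mathcal{L})$ does not contain the empty operator, every element of $\mathcal{G}(\mathcal{L})$ admits a seed, and every seed of an element of $\mathcal{G}(\mathcal{L})$ is a pair of injective terms.
   Context: Terms are built from an infinite set of variables with one binary operation symbol $*$; addresses are finite sequences over $\{0,1\}$ ($0$ = left, $1$ = right), $t/\alpha$ is the subterm at $\alpha$. A term is injective if no variable occurs twice in it. A law $l=r$ is linear if it is balanced (same variables on both sides) and $l$, $r$ are injective. For an oriented law $L=(l,r)$ and address $\alpha$, $O^{+}_{L,\alpha}$ is the partial map sending $t$ with $t/\alpha=l\sigma$ (for a substitution $\sigma$) to the term obtained by replacing that subterm by $r\sigma$, and $O^{-}_{L,\alpha}$ is its inverse; $\mathcal{G}(\mathcal{L})$ is the monoid of partial maps generated by these under composition. A pair of terms $(l,r)$ is a seed of a partial operator $f$ if $f$, as a set of pairs, is exactly the set of all pairs $(l\sigma,r\sigma)$ with $\sigma$ a substitution. *)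

theory Defs
  imports Main
begin

datatype 'v trm = Var 'v | Op "'v trm" "'v trm"

text \<open>Addresses: finite sequences over {0,1}; False = 0 = left, True = 1 = right.\<close>
type_synonym addr = "bool list"

fun subterm :: "'v trm \<Rightarrow> addr \<Rightarrow> 'v trm option" where
  "subterm t [] = Some t"
| "subterm (Var x) (d # \<alpha>) = None"
| "subterm (Op t1 t2) (d # \<alpha>) = (if d then subterm t2 \<alpha> else subterm t1 \<alpha>)"

fun replace :: "'v trm \<Rightarrow> addr \<Rightarrow> 'v trm \<Rightarrow> 'v trm option" where
  "replace t [] s = Some s"
| "replace (Var x) (d # \<alpha>) s = None"
| "replace (Op t1 t2) (d # \<alpha>) s =
     (if d then map_option (\<lambda>u. Op t1 u) (replace t2 \<alpha> s)
      else map_option (\<lambda>u. Op u t2) (replace t1 \<alpha> s))"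

fun subst :: "('v \<Rightarrow> 'v trm) \<Rightarrow> 'v trm \<Rightarrow> 'v trm" where
  "subst \<sigma> (Var x) = \<sigma> x"
| "subst \<sigma> (Op t1 t2) = Op (subst \<sigma> t1) (subst \<sigma> t2)"

fun var_occs :: "'v trm \<Rightarrow> 'v list" where
  "var_occs (Var x) = [x]"
| "var_occs (Op t1 t2) = var_occs t1 @ var_occs t2"

definition injective_term :: "'v trm \<Rightarrow> bool" where
  "injective_term t \<longleftrightarrow> distinct (var_occs t)"

definition linear_law :: "'v trm \<times> 'v trm \<Rightarrow> bool" where
  "linear_law L \<longleftrightarrow> set (var_occs (fst L)) = set (var_occs (snd L))
     \<and> injective_term (fst L) \<and> injective_term (snd L)"

text \<open>Partial operators are represented as sets of pairs (functional relations).\<close>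
type_synonym 'v op = "('v trm \<times> 'v trm) set"

definition O_plus :: "'v trm \<times> 'v trm \<Rightarrow> addr \<Rightarrow> 'v op" where
  "O_plus L \<alpha> = {(t, t'). \<exists>\<sigma>. subterm t \<alpha> = Some (subst \<sigma> (fst L))
                              \<and> replace t \<alpha> (subst \<sigma> (snd L)) = Some t'}"

definition O_minus :: "'v trm \<times> 'v trm \<Rightarrow> addr \<Rightarrow> 'v op" where
  "O_minus L \<alpha> = converse (O_plus L \<alpha>)"

definition generators :: "('v trm \<times> 'v trm) set \<Rightarrow> 'v op set" where
  "generators Ls = {O_plus L \<alpha> | L \<alpha>. L \<in> Ls} \<union> {O_minus L \<alpha> | L \<alpha>. L \<in> Ls}"

inductive_set G_mon :: "('v trm \<times> 'v trm) set \<Rightarrow> 'v op set" for Ls where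
  G_id: "Id \<in> G_mon Ls"
| G_step: "f \<in> G_mon Ls \<Longrightarrow> g \<in> generators Ls \<Longrightarrow> f O g \<in> G_mon Ls"

definition seed :: "'v op \<Rightarrow> 'v trm \<times> 'v trm \<Rightarrow> bool" where
  "seed f p \<longleftrightarrow> f = {(subst \<sigma> (fst p), subst \<sigma> (snd p)) | \<sigma>. True}"

end

theory Submission
  imports Defs
begin

abbreviation vars :: "'v trm \<Rightarrow> 'v set" where "vars t \<equiv> set (var_occs t)"

definition isubst :: "('v \<Rightarrow> 'v trm) \<Rightarrow> 'v set \<Rightarrow> bool" where
  "isubst \<theta> V \<longleftrightarrow> (\<forall>x\<in>V. injective_term (\<theta> x)) \<and> (\<forall>x\<in>V. \<forall>y\<in>V. x \<noteq> y \<longrightarrow> vars (\<theta> x) \<inter> vars (\<theta> y) = {})"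

lemma var_occs_ne: "var_occs t \<noteq> []"
  by (induction t) auto

lemma vars_subst: "vars (subst \<theta> t) = (\<Union>x\<in>vars t. vars (\<theta> x))"
  by (induction t) auto

lemma subst_cong: "(\<And>x. x \<in> vars t \<Longrightarrow> \<sigma> x = \<tau> x) \<Longrightarrow> subst \<sigma> t = subst \<tau> t"
  by (induction t) auto

lemma subst_comp: "subst \<tau> (subst \<sigma> t) = subst (\<lambda>x. subst \<tau> (\<sigma> x)) t"
  by (induction t) auto

lemma subst_Var: "subst Var t = t"
  by (induction t) auto

lemma inj_subst_iff: "injective_term (subst \<theta> t) \<longleftrightarrow> injective_term t \<and> isubst \<theta> (vars t)"
proof (induction t)
  case (Var x)
  then show ?case by (simp add: injective_term_def isubst_def)
next
  case (Op t1 t2)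
  have ne: "\<And>x. vars (\<theta> x) \<noteq> {}" using var_occs_ne by (metis set_empty)
  show ?case
  proof
    assume a: "injective_term (subst \<theta> (Op t1 t2))"
    then have d: "injective_term (subst \<theta> t1)" "injective_term (subst \<theta> t2)"
      "vars (subst \<theta> t1) \<inter> vars (subst \<theta> t2) = {}"
      by (auto simp: injective_term_def)
    then have i1: "injective_term t1" "isubst \<theta> (vars t1)" "injective_term t2" "isubst \<theta> (vars t2)"
      using Op.IH by auto
    have disj: "vars t1 \<inter> vars t2 = {}"
    proof (rule ccontr)
      assume "vars t1 \<inter> vars t2 \<noteq> {}"
      then obtain x where "x \<in> vars t1" "x \<in> vars t2" by blast
      then have "vars (\<theta> x) \<subseteq> vars (subst \<theta> t1) \<inter> vars (subst \<theta> t2)"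
        by (auto simp: vars_subst)
      then show False using d(3) ne[of x] by auto
    qed
    have "isubst \<theta> (vars t1 \<union> vars t2)"
      unfolding isubst_def
    proof (intro conjI ballI impI)
      fix x assume "x \<in> vars t1 \<union> vars t2"
      then show "injective_term (\<theta> x)" using i1 by (auto simp: isubst_def)
    next
      fix x y assume xy: "x \<in> vars t1 \<union> vars t2" "y \<in> vars t1 \<union> vars t2" "x \<noteq> y"
      show "vars (\<theta> x) \<inter> vars (\<theta> y) = {}"
      proof (cases "x \<in> vars t1 \<longleftrightarrow> y \<in> vars t1")
        case True
        then show ?thesis using xy i1 disj unfolding isubst_def by blast
      next
        case False
        then have "vars (\<theta> x) \<inter> vars (\<theta> y) \<subseteq> vars (subst \<theta> t1) \<inter> vars (subst \<theta> t2)"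
          using xy by (auto simp: vars_subst)
        then show ?thesis using d(3) by blast
      qed
    qed
    then show "injective_term (Op t1 t2) \<and> isubst \<theta> (vars (Op t1 t2))"
      using i1 disj by (auto simp: injective_term_def)
  next
    assume a: "injective_term (Op t1 t2) \<and> isubst \<theta> (vars (Op t1 t2))"
    then have i: "injective_term t1" "injective_term t2" "vars t1 \<inter> vars t2 = {}"
      and s: "isubst \<theta> (vars t1 \<union> vars t2)"
      by (auto simp: injective_term_def)
    have s1: "isubst \<theta> (vars t1)" "isubst \<theta> (vars t2)" using s by (auto simp: isubst_def)
    have "vars (subst \<theta> t1) \<inter> vars (subst \<theta> t2) = {}"
    proof -
      have False if "x \<in> vars t1" "y \<in> vars t2" "z \<in> vars (\<theta> x)" "z \<in> vars (\<theta> y)" for x y z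
      proof -
        have "x \<noteq> y" using that i(3) by auto
        then have "vars (\<theta> x) \<inter> vars (\<theta> y) = {}" using s that(1,2) unfolding isubst_def by blast
        then show False using that(3,4) by auto
      qed
      then show ?thesis unfolding vars_subst by blast
    qed
    then show "injective_term (subst \<theta> (Op t1 t2))"
      using Op.IH i s1 by (auto simp: injective_term_def)
  qed
qed

lemma vars_in_subst: "x \<in> vars t \<Longrightarrow> vars (\<sigma> x) \<subseteq> vars (subst \<sigma> t)"
  by (auto simp: vars_subst)

lemma unify:
  assumes "injective_term s" "injective_term t" "vars s \<inter> vars t = {}"
  shows "\<exists>u \<theta>1 \<theta>2. subst \<theta>1 s = u \<and> subst \<theta>2 t = u \<and> injective_term u
     \<and> vars u \<subseteq> vars s \<union> vars t
     \<and> (\<forall>\<sigma> \<tau>. subst \<sigma> s = subst \<tau> t \<longrightarrow> (\<exists>\<rho>. (\<forall>x\<in>vars s. subst \<rho> (\<theta>1 x) = \<sigma> x)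
                                              \<and> (\<forall>y\<in>vars t. subst \<rho> (\<theta>2 y) = \<tau> y)))"
  using assms
proof (induction s arbitrary: t)
  case (Var x)
  show ?case
    apply (rule exI[of _ t], rule exI[of _ "\<lambda>_. t"], rule exI[of _ Var])
    using Var.prems by (auto simp: subst_Var)
next
  case (Op s1 s2)
  show ?case
  proof (cases t)
    case (Var y)
    show ?thesis
      apply (rule exI[of _ "Op s1 s2"], rule exI[of _ Var], rule exI[of _ "\<lambda>_. Op s1 s2"])
      using Op.prems Var by (auto simp: subst_Var)
  next
    case (Op t1 t2)
    note t = this
    have iss: "injective_term s1" "injective_term s2" "vars s1 \<inter> vars s2 = {}"
      using Op.prems(1) by (auto simp: injective_term_def)
    have it: "injective_term t1" "injective_term t2" "vars t1 \<inter> vars t2 = {}"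
      using Op.prems(2) t by (auto simp: injective_term_def)
    have d: "vars s1 \<inter> vars t1 = {}" "vars s2 \<inter> vars t2 = {}"
      "vars s1 \<inter> vars t2 = {}" "vars s2 \<inter> vars t1 = {}"
      using Op.prems(3) t by auto
    obtain u1 a1 b1 where h1: "subst a1 s1 = u1" "subst b1 t1 = u1" "injective_term u1"
      "vars u1 \<subseteq> vars s1 \<union> vars t1"
      "\<forall>\<sigma> \<tau>. subst \<sigma> s1 = subst \<tau> t1 \<longrightarrow> (\<exists>\<rho>. (\<forall>x\<in>vars s1. subst \<rho> (a1 x) = \<sigma> x)
                                              \<and> (\<forall>y\<in>vars t1. subst \<rho> (b1 y) = \<tau> y))"
      using Op.IH(1)[OF iss(1) it(1) d(1)] by blast
    obtain u2 a2 b2 where h2: "subst a2 s2 = u2" "subst b2 t2 = u2" "injective_term u2"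
      "vars u2 \<subseteq> vars s2 \<union> vars t2"
      "\<forall>\<sigma> \<tau>. subst \<sigma> s2 = subst \<tau> t2 \<longrightarrow> (\<exists>\<rho>. (\<forall>x\<in>vars s2. subst \<rho> (a2 x) = \<sigma> x)
                                              \<and> (\<forall>y\<in>vars t2. subst \<rho> (b2 y) = \<tau> y))"
      using Op.IH(2)[OF iss(2) it(2) d(2)] by blast
    define a where "a = (\<lambda>z. if z \<in> vars s1 then a1 z else a2 z)"
    define b where "b = (\<lambda>z. if z \<in> vars t1 then b1 z else b2 z)"
    have "subst a s1 = subst a1 s1" by (rule subst_cong) (simp add: a_def)
    moreover have "subst a s2 = subst a2 s2" using iss(3) by (intro subst_cong) (auto simp add: a_def)
    ultimately have sa: "subst a (Op s1 s2) = Op u1 u2" using h1(1) h2(1) by simp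
    have "subst b t1 = subst b1 t1" by (rule subst_cong) (simp add: b_def)
    moreover have "subst b t2 = subst b2 t2" using it(3) by (intro subst_cong) (auto simp add: b_def)
    ultimately have sb: "subst b t = Op u1 u2" using h1(2) h2(2) t by simp
    have du: "vars u1 \<inter> vars u2 = {}" using h1(4) h2(4) iss(3) it(3) d by blast
    have iu: "injective_term (Op u1 u2)" using du h1(3) h2(3) by (auto simp: injective_term_def)
    have vu: "vars (Op u1 u2) \<subseteq> vars (Op s1 s2) \<union> vars t" using h1(4) h2(4) t by auto
    have mg: "\<exists>\<rho>. (\<forall>x\<in>vars (Op s1 s2). subst \<rho> (a x) = \<sigma> x) \<and> (\<forall>y\<in>vars t. subst \<rho> (b y) = \<tau> y)"
      if eq: "subst \<sigma> (Op s1 s2) = subst \<tau> t" for \<sigma> \<tau>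
    proof -
      from eq t have e1: "subst \<sigma> s1 = subst \<tau> t1" and e2: "subst \<sigma> s2 = subst \<tau> t2" by auto
      obtain \<rho>1 where r1: "\<forall>x\<in>vars s1. subst \<rho>1 (a1 x) = \<sigma> x" "\<forall>y\<in>vars t1. subst \<rho>1 (b1 y) = \<tau> y"
        using h1(5) e1 by blast
      obtain \<rho>2 where r2: "\<forall>x\<in>vars s2. subst \<rho>2 (a2 x) = \<sigma> x" "\<forall>y\<in>vars t2. subst \<rho>2 (b2 y) = \<tau> y"
        using h2(5) e2 by blast
      define \<rho> where "\<rho> = (\<lambda>z. if z \<in> vars u1 then \<rho>1 z else \<rho>2 z)"
      have c1: "subst \<rho> w = subst \<rho>1 w" if "vars w \<subseteq> vars u1" for w
        using that by (intro subst_cong) (auto simp: \<rho>_def)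
      have c2: "subst \<rho> w = subst \<rho>2 w" if "vars w \<subseteq> vars u2" for w
        using that du by (intro subst_cong) (auto simp: \<rho>_def)
      have A: "subst \<rho> (a x) = \<sigma> x" if "x \<in> vars (Op s1 s2)" for x
      proof (cases "x \<in> vars s1")
        case True
        then have "vars (a1 x) \<subseteq> vars u1" using vars_in_subst[of x s1 a1] h1(1) by simp
        then show ?thesis using c1 r1(1) True by (simp add: a_def)
      next
        case False
        then have x2: "x \<in> vars s2" using that by simp
        then have "vars (a2 x) \<subseteq> vars u2" using vars_in_subst[of x s2 a2] h2(1) by simp
        then show ?thesis using c2 r2(1) False x2 by (simp add: a_def)
      qed
      have B: "subst \<rho> (b y) = \<tau> y" if "y \<in> vars t" for y
      proof (cases "y \<in> vars t1")
        case True
        then have "vars (b1 y) \<subseteq> vars u1" using vars_in_subst[of y t1 b1] h1(2) by simp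
        then show ?thesis using c1 r1(2) True by (simp add: b_def)
      next
        case False
        then have y2: "y \<in> vars t2" using that t by simp
        then have "vars (b2 y) \<subseteq> vars u2" using vars_in_subst[of y t2 b2] h2(2) by simp
        then show ?thesis using c2 r2(2) False y2 by (simp add: b_def)
      qed
      show ?thesis using A B by blast
    qed
    show ?thesis
      apply (rule exI[of _ "Op u1 u2"], rule exI[of _ a], rule exI[of _ b])
      using sa sb iu vu mg by blast
  qed
qed

lemma compose:
  assumes f: "seed f (l1, r1)" and lf: "linear_law (l1, r1)"
    and g: "seed g (l2, r2)" and lg: "linear_law (l2, r2)"
    and disj: "vars r1 \<inter> vars l2 = {}"
  shows "\<exists>p. seed (f O g) p \<and> linear_law p"
proof -
  have i: "injective_term l1" "injective_term r1" "vars l1 = vars r1"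
    "injective_term l2" "injective_term r2" "vars l2 = vars r2"
    using lf lg by (auto simp: linear_law_def)
  obtain u \<theta>1 \<theta>2 where u: "subst \<theta>1 r1 = u" "subst \<theta>2 l2 = u" "injective_term u"
    and mg: "\<forall>\<sigma> \<tau>. subst \<sigma> r1 = subst \<tau> l2 \<longrightarrow> (\<exists>\<rho>. (\<forall>x\<in>vars r1. subst \<rho> (\<theta>1 x) = \<sigma> x)
                                              \<and> (\<forall>y\<in>vars l2. subst \<rho> (\<theta>2 y) = \<tau> y))"
    using unify[OF i(2) i(4) disj] by blast
  have s1: "isubst \<theta>1 (vars r1)" using u(1,3) inj_subst_iff by blast
  have s2: "isubst \<theta>2 (vars l2)" using u(2,3) inj_subst_iff by blast
  have j1: "injective_term (subst \<theta>1 l1)" using inj_subst_iff i s1 by metis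
  have j2: "injective_term (subst \<theta>2 r2)" using inj_subst_iff i s2 by metis
  have "vars (subst \<theta>1 l1) = vars (subst \<theta>1 r1)" unfolding vars_subst i(3) ..
  then have v1: "vars (subst \<theta>1 l1) = vars u" using u(1) by simp
  have "vars (subst \<theta>2 r2) = vars (subst \<theta>2 l2)" unfolding vars_subst i(6) ..
  then have v2: "vars (subst \<theta>2 r2) = vars u" using u(2) by simp
  have lin: "linear_law (subst \<theta>1 l1, subst \<theta>2 r2)"
    using j1 j2 v1 v2 by (simp add: linear_law_def)
  have "f O g = {(subst \<rho> (subst \<theta>1 l1), subst \<rho> (subst \<theta>2 r2)) | \<rho>. True}"
  proof (intro set_eqI iffI)
    fix p assume "p \<in> f O g"
    then obtain a b c where p: "p = (a, c)" "(a, b) \<in> f" "(b, c) \<in> g" by blast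
    obtain \<sigma> where \<sigma>: "a = subst \<sigma> l1" "b = subst \<sigma> r1" using p(2) f by (auto simp: seed_def)
    obtain \<tau> where \<tau>: "b = subst \<tau> l2" "c = subst \<tau> r2" using p(3) g by (auto simp: seed_def)
    obtain \<rho> where \<rho>: "\<forall>x\<in>vars r1. subst \<rho> (\<theta>1 x) = \<sigma> x" "\<forall>y\<in>vars l2. subst \<rho> (\<theta>2 y) = \<tau> y"
      using mg \<sigma>(2) \<tau>(1) by metis
    have "subst \<rho> (subst \<theta>1 l1) = a"
      unfolding subst_comp \<sigma>(1) using \<rho>(1) i(3) by (intro subst_cong) auto
    moreover have "subst \<rho> (subst \<theta>2 r2) = c"
      unfolding subst_comp \<tau>(2) using \<rho>(2) i(6) by (intro subst_cong) auto
    ultimately show "p \<in> {(subst \<rho> (subst \<theta>1 l1), subst \<rho> (subst \<theta>2 r2)) | \<rho>. True}"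
      using p(1) by blast
  next
    fix p assume "p \<in> {(subst \<rho> (subst \<theta>1 l1), subst \<rho> (subst \<theta>2 r2)) | \<rho>. True}"
    then obtain \<rho> where p: "p = (subst \<rho> (subst \<theta>1 l1), subst \<rho> (subst \<theta>2 r2))" by blast
    have "(subst \<rho> (subst \<theta>1 l1), subst \<rho> (subst \<theta>1 r1)) \<in> f"
      using f unfolding seed_def subst_comp by auto
    moreover have "(subst \<rho> (subst \<theta>2 l2), subst \<rho> (subst \<theta>2 r2)) \<in> g"
      using g unfolding seed_def subst_comp by auto
    ultimately show "p \<in> f O g" using p u(1,2) by auto
  qed
  then have "seed (f O g) (subst \<theta>1 l1, subst \<theta>2 r2)" by (simp add: seed_def)
  then show ?thesis using lin by blast
qed

lemma fresh_rename:
  assumes inf: "infinite (UNIV :: 'v set)" and A: "finite (A :: 'v set)" and B: "finite (B :: 'v set)"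
  shows "\<exists>\<pi>. inj_on \<pi> A \<and> \<pi> ` A \<inter> B = {}"
proof -
  have "infinite (UNIV - B)" using inf B by (simp add: Diff_infinite_finite)
  then obtain C where C: "C \<subseteq> UNIV - B" "finite C" "card C = card A"
    using infinite_arbitrarily_large by blast
  then obtain \<pi> where "bij_betw \<pi> A C" using finite_same_card_bij[OF A C(2) C(3)[symmetric]] by blast
  then have "inj_on \<pi> A" "\<pi> ` A = C" unfolding bij_betw_def by auto
  then show ?thesis using C(1) by blast
qed

lemma rename_seed:
  assumes inf: "infinite (UNIV :: 'v set)" and s: "seed g (l, r)" and lin: "linear_law (l, r)"
    and B: "finite (B :: 'v set)"
  shows "\<exists>l' r'. seed g (l', r') \<and> linear_law (l', r') \<and> vars l' \<inter> B = {}"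
proof -
  obtain \<pi> where \<pi>: "inj_on \<pi> (vars l)" "\<pi> ` vars l \<inter> B = {}"
    using fresh_rename[OF inf _ B, of "vars l"] by auto
  have vl: "vars l = vars r" and il: "injective_term l" and ir: "injective_term r"
    using lin by (auto simp: linear_law_def)
  define \<theta> where "\<theta> = (\<lambda>x. Var (\<pi> x) :: 'v trm)"
  have is1: "isubst \<theta> (vars l)" using \<pi>(1) unfolding isubst_def \<theta>_def inj_on_def
    by (auto simp: injective_term_def)
  have lin': "linear_law (subst \<theta> l, subst \<theta> r)"
    using is1 il ir vl inj_subst_iff unfolding linear_law_def by (auto simp: vars_subst)
  have vv: "vars (subst \<theta> l) = \<pi> ` vars l" by (auto simp: vars_subst \<theta>_def)
  have "g = {(subst \<sigma> (subst \<theta> l), subst \<sigma> (subst \<theta> r)) | \<sigma>. True}"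
  proof (intro set_eqI iffI)
    fix p assume "p \<in> g"
    then obtain \<sigma> where p: "p = (subst \<sigma> l, subst \<sigma> r)" using s by (auto simp: seed_def)
    define \<sigma>' where "\<sigma>' = (\<lambda>v. \<sigma> (inv_into (vars l) \<pi> v))"
    have "subst \<sigma>' (subst \<theta> l) = subst \<sigma> l"
      unfolding subst_comp using \<pi>(1) by (intro subst_cong) (simp add: \<sigma>'_def \<theta>_def)
    moreover have "subst \<sigma>' (subst \<theta> r) = subst \<sigma> r"
      unfolding subst_comp using \<pi>(1) vl by (intro subst_cong) (simp add: \<sigma>'_def \<theta>_def)
    ultimately have "p = (subst \<sigma>' (subst \<theta> l), subst \<sigma>' (subst \<theta> r))" using p by simp
    then show "p \<in> {(subst \<sigma> (subst \<theta> l), subst \<sigma> (subst \<theta> r)) | \<sigma>. True}"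
      by blast
  next
    fix p assume "p \<in> {(subst \<sigma> (subst \<theta> l), subst \<sigma> (subst \<theta> r)) | \<sigma>. True}"
    then obtain \<sigma> where "p = (subst \<sigma> (subst \<theta> l), subst \<sigma> (subst \<theta> r))" by blast
    then have "p = (subst (\<lambda>x. subst \<sigma> (\<theta> x)) l, subst (\<lambda>x. subst \<sigma> (\<theta> x)) r)"
      by (simp add: subst_comp)
    then show "p \<in> g" using s unfolding seed_def by auto
  qed
  then have "seed g (subst \<theta> l, subst \<theta> r)" unfolding seed_def by simp
  moreover have "vars (subst \<theta> l) \<inter> B = {}" using vv \<pi>(2) by simp
  ultimately show ?thesis using lin' by blast
qed

lemma O_plus_Nil: "O_plus L [] = {(subst \<sigma> (fst L), subst \<sigma> (snd L)) | \<sigma>. True}"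
  unfolding O_plus_def by auto

lemma O_plus_Cons_True: "O_plus L (True # \<alpha>) = {(Op a t, Op a t') | a t t'. (t, t') \<in> O_plus L \<alpha>}"
proof (intro set_eqI iffI)
  fix p assume "p \<in> O_plus L (True # \<alpha>)"
  then obtain t t' \<sigma> where p: "p = (t, t')" "subterm t (True # \<alpha>) = Some (subst \<sigma> (fst L))"
    "replace t (True # \<alpha>) (subst \<sigma> (snd L)) = Some t'"
    unfolding O_plus_def by auto
  then obtain a b where t: "t = Op a b" by (cases t) auto
  then obtain b' where "replace b \<alpha> (subst \<sigma> (snd L)) = Some b'" "t' = Op a b'" using p by auto
  then show "p \<in> {(Op a t, Op a t') | a t t'. (t, t') \<in> O_plus L \<alpha>}"
    using p t unfolding O_plus_def by auto
next
  fix p assume "p \<in> {(Op a t, Op a t') | a t t'. (t, t') \<in> O_plus L \<alpha>}"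
  then show "p \<in> O_plus L (True # \<alpha>)" unfolding O_plus_def by auto
qed

lemma O_plus_Cons_False: "O_plus L (False # \<alpha>) = {(Op t a, Op t' a) | a t t'. (t, t') \<in> O_plus L \<alpha>}"
proof (intro set_eqI iffI)
  fix p assume "p \<in> O_plus L (False # \<alpha>)"
  then obtain t t' \<sigma> where p: "p = (t, t')" "subterm t (False # \<alpha>) = Some (subst \<sigma> (fst L))"
    "replace t (False # \<alpha>) (subst \<sigma> (snd L)) = Some t'"
    unfolding O_plus_def by auto
  then obtain a b where t: "t = Op b a" by (cases t) auto
  then obtain b' where "replace b \<alpha> (subst \<sigma> (snd L)) = Some b'" "t' = Op b' a" using p by auto
  then show "p \<in> {(Op t a, Op t' a) | a t t'. (t, t') \<in> O_plus L \<alpha>}"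
    using p t unfolding O_plus_def by auto
next
  fix p assume "p \<in> {(Op t a, Op t' a) | a t t'. (t, t') \<in> O_plus L \<alpha>}"
  then show "p \<in> O_plus L (False # \<alpha>)" unfolding O_plus_def by auto
qed

lemma ctx_seed:
  assumes s: "seed f (l, r)" and lin: "linear_law (l, r)" and z: "z \<notin> vars l"
  shows "seed {(Op a t, Op a t') | a t t'. (t, t') \<in> f} (Op (Var z) l, Op (Var z) r)"
    and "seed {(Op t a, Op t' a) | a t t'. (t, t') \<in> f} (Op l (Var z), Op r (Var z))"
proof -
  have vl: "vars l = vars r" using lin by (simp add: linear_law_def)
  have key: "subst (\<sigma>(z := a)) l = subst \<sigma> l \<and> subst (\<sigma>(z := a)) r = subst \<sigma> r" for \<sigma> a
    using z vl by (auto intro!: subst_cong)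
  show "seed {(Op a t, Op a t') | a t t'. (t, t') \<in> f} (Op (Var z) l, Op (Var z) r)"
    unfolding seed_def
  proof (intro set_eqI iffI)
    fix p assume "p \<in> {(Op a t, Op a t') | a t t'. (t, t') \<in> f}"
    then obtain a \<sigma> where p: "p = (Op a (subst \<sigma> l), Op a (subst \<sigma> r))" using s by (auto simp: seed_def)
    then have "p = (subst (\<sigma>(z := a)) (Op (Var z) l), subst (\<sigma>(z := a)) (Op (Var z) r))"
      using key by simp
    then show "p \<in> {(subst \<sigma> (fst (Op (Var z) l, Op (Var z) r)), subst \<sigma> (snd (Op (Var z) l, Op (Var z) r))) | \<sigma>. True}"
      unfolding fst_conv snd_conv by blast
  next
    fix p assume "p \<in> {(subst \<sigma> (fst (Op (Var z) l, Op (Var z) r)), subst \<sigma> (snd (Op (Var z) l, Op (Var z) r))) | \<sigma>. True}"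
    then show "p \<in> {(Op a t, Op a t') | a t t'. (t, t') \<in> f}" using s by (auto simp: seed_def)
  qed
  show "seed {(Op t a, Op t' a) | a t t'. (t, t') \<in> f} (Op l (Var z), Op r (Var z))"
    unfolding seed_def
  proof (intro set_eqI iffI)
    fix p assume "p \<in> {(Op t a, Op t' a) | a t t'. (t, t') \<in> f}"
    then obtain a \<sigma> where p: "p = (Op (subst \<sigma> l) a, Op (subst \<sigma> r) a)" using s by (auto simp: seed_def)
    then have "p = (subst (\<sigma>(z := a)) (Op l (Var z)), subst (\<sigma>(z := a)) (Op r (Var z)))"
      using key by simp
    then show "p \<in> {(subst \<sigma> (fst (Op l (Var z), Op r (Var z))), subst \<sigma> (snd (Op l (Var z), Op r (Var z)))) | \<sigma>. True}"
      unfolding fst_conv snd_conv by blast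
  next
    fix p assume "p \<in> {(subst \<sigma> (fst (Op l (Var z), Op r (Var z))), subst \<sigma> (snd (Op l (Var z), Op r (Var z)))) | \<sigma>. True}"
    then show "p \<in> {(Op t a, Op t' a) | a t t'. (t, t') \<in> f}" using s by (auto simp: seed_def)
  qed
qed

lemma ctx_lin:
  assumes lin: "linear_law (l, r)" and z: "z \<notin> vars l"
  shows "linear_law (Op (Var z) l, Op (Var z) r)" "linear_law (Op l (Var z), Op r (Var z))"
  using assms by (auto simp: linear_law_def injective_term_def)

lemma O_plus_seed:
  assumes inf: "infinite (UNIV :: 'v set)" and L: "linear_law (L :: 'v trm \<times> 'v trm)"
  shows "\<exists>p. seed (O_plus L \<alpha>) p \<and> linear_law p"
proof (induction \<alpha>)
  case Nil
  have "seed (O_plus L []) L" by (simp add: O_plus_Nil seed_def)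
  then show ?case using L by blast
next
  case (Cons d \<alpha>)
  then obtain l r where s: "seed (O_plus L \<alpha>) (l, r)" and lin: "linear_law (l, r)" by auto
  obtain z where z: "z \<notin> vars l" using ex_new_if_finite[OF inf, of "vars l"] by auto
  show ?case
  proof (cases d)
    case True
    have "seed (O_plus L (True # \<alpha>)) (Op (Var z) l, Op (Var z) r)"
      unfolding O_plus_Cons_True by (rule ctx_seed(1)[OF s lin z])
    moreover have "d = True" using True by simp
    ultimately show ?thesis using ctx_lin(1)[OF lin z] by blast
  next
    case False
    have "seed (O_plus L (False # \<alpha>)) (Op l (Var z), Op r (Var z))"
      unfolding O_plus_Cons_False by (rule ctx_seed(2)[OF s lin z])
    moreover have "d = False" using False by simp
    ultimately show ?thesis using ctx_lin(2)[OF lin z] by blast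
  qed
qed

lemma converse_seed: "seed f (l, r) \<Longrightarrow> seed (converse f) (r, l)"
  unfolding seed_def by auto

lemma gen_seed:
  assumes inf: "infinite (UNIV :: 'v set)" and Ls: "\<forall>L\<in>Ls. linear_law L"
    and g: "g \<in> generators (Ls :: ('v trm \<times> 'v trm) set)"
  shows "\<exists>p. seed g p \<and> linear_law p"
proof -
  obtain L \<alpha> where L: "L \<in> Ls" and g': "g = O_plus L \<alpha> \<or> g = O_minus L \<alpha>"
    using g unfolding generators_def by auto
  obtain l r where s: "seed (O_plus L \<alpha>) (l, r)" "linear_law (l, r)"
    using O_plus_seed[OF inf, of L \<alpha>] L Ls by auto
  have "seed (O_minus L \<alpha>) (r, l)" using converse_seed[OF s(1)] by (simp add: O_minus_def)
  moreover have "linear_law (r, l)" using s(2) by (auto simp: linear_law_def)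
  ultimately show ?thesis using s g' by blast
qed

lemma G_seed:
  assumes inf: "infinite (UNIV :: 'v set)" and Ls: "\<forall>L\<in>Ls. linear_law L"
  shows "f \<in> G_mon (Ls :: ('v trm \<times> 'v trm) set) \<Longrightarrow> \<exists>p. seed f p \<and> linear_law p"
proof (induction rule: G_mon.induct)
  case G_id
  have "seed Id (Var undefined, Var undefined)"
    unfolding seed_def by (auto intro: exI[of _ "\<lambda>_. _"])
  moreover have "linear_law (Var undefined :: 'v trm, Var undefined)"
    by (simp add: linear_law_def injective_term_def)
  ultimately show ?case by blast
next
  case (G_step f g)
  obtain l1 r1 where f: "seed f (l1, r1)" "linear_law (l1, r1)" using G_step.IH by auto
  obtain l2 r2 where g: "seed g (l2, r2)" "linear_law (l2, r2)" using gen_seed[OF inf Ls G_step.hyps(2)] by auto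
  obtain l2' r2' where g': "seed g (l2', r2')" "linear_law (l2', r2')" "vars l2' \<inter> vars r1 = {}"
    using rename_seed[OF inf g, of "vars r1"] by auto
  show ?case using compose[OF f g'(1,2)] g'(3) by blast
qed

lemma subst_id: "subst \<theta> t = t \<Longrightarrow> x \<in> vars t \<Longrightarrow> \<theta> x = Var x"
  by (induction t) auto

lemma renaming_isubst:
  assumes "\<forall>x\<in>V. subst \<tau> (\<sigma> x) = Var x"
  shows "isubst \<sigma> V"
proof -
  have v: "\<exists>y. \<sigma> x = Var y \<and> \<tau> y = Var x" if "x \<in> V" for x
    using assms that by (cases "\<sigma> x") auto
  show ?thesis unfolding isubst_def
  proof (intro conjI ballI impI)
    fix x assume "x \<in> V"
    then obtain y where "\<sigma> x = Var y" using v by blast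
    then show "injective_term (\<sigma> x)" by (simp add: injective_term_def)
  next
    fix x y assume xy: "x \<in> V" "y \<in> V" "x \<noteq> y"
    obtain a b where "\<sigma> x = Var a" "\<tau> a = Var x" "\<sigma> y = Var b" "\<tau> b = Var y" using v xy by blast
    then show "vars (\<sigma> x) \<inter> vars (\<sigma> y) = {}" using xy(3) by auto
  qed
qed

lemma seed_inj:
  assumes s0: "seed f (l0, r0)" and lin: "linear_law (l0, r0)" and s: "seed f (l, r)"
  shows "injective_term l \<and> injective_term r"
proof -
  have "(subst Var l, subst Var r) \<in> f" using s unfolding seed_def by auto
  then obtain \<sigma> where \<sigma>: "l = subst \<sigma> l0" "r = subst \<sigma> r0" using s0 by (auto simp: seed_def subst_Var)
  have "(subst Var l0, subst Var r0) \<in> f" using s0 unfolding seed_def by auto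
  then obtain \<tau> where \<tau>: "l0 = subst \<tau> l" "r0 = subst \<tau> r" using s by (auto simp: seed_def subst_Var)
  have e1: "subst (\<lambda>x. subst \<tau> (\<sigma> x)) l0 = l0"
    unfolding subst_comp[symmetric] \<sigma>(1)[symmetric] \<tau>(1)[symmetric] by (rule refl)
  have e2: "subst (\<lambda>x. subst \<tau> (\<sigma> x)) r0 = r0"
    unfolding subst_comp[symmetric] \<sigma>(2)[symmetric] \<tau>(2)[symmetric] by (rule refl)
  have "isubst \<sigma> (vars l0)" using subst_id[OF e1] by (intro renaming_isubst) blast
  moreover have "isubst \<sigma> (vars r0)" using subst_id[OF e2] by (intro renaming_isubst) blast
  ultimately show ?thesis using lin \<sigma> inj_subst_iff by (auto simp: linear_law_def)
qed

theorem lemma2p5: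
  fixes Ls :: "('v trm \<times> 'v trm) set"
  assumes "infinite (UNIV :: 'v set)"
    and "\<forall>L\<in>Ls. linear_law L"
  shows "\<forall>f\<in>G_mon Ls. f \<noteq> {} \<and> (\<exists>p. seed f p)
           \<and> (\<forall>l r. seed f (l, r) \<longrightarrow> injective_term l \<and> injective_term r)"
proof
  fix f assume f: "f \<in> G_mon Ls"
  obtain l0 r0 where s0: "seed f (l0, r0)" "linear_law (l0, r0)" using G_seed[OF assms f] by auto
  have "(subst Var l0, subst Var r0) \<in> f" using s0(1) unfolding seed_def by auto
  then have "f \<noteq> {}" by auto
  moreover have "\<forall>l r. seed f (l, r) \<longrightarrow> injective_term l \<and> injective_term r"
    using seed_inj[OF s0] by blast
  ultimately show "f \<noteq> {} \<and> (\<exists>p. seed f p)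
           \<and> (\<forall>l r. seed f (l, r) \<longrightarrow> injective_term l \<and> injective_term r)" using s0 by blast
qed

end
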